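(* Let $(W,S)$ be a Coxeter group with Coxeter matrix $(m_{s,s'})$, let $w\in W$, let $(s,t)\in\mathfrak{M}$, and let $\vec a,\vec b$ be reduced expressions for $w$ such that $\vec b$ is obtained from $\vec a$ by an $(s,t)$-braid move. Let $q\in W$ be such that $\operatorname{Invs}\vec b$ is obtained from $\operatorname{Invs}\vec a$ by replacing a particular factor of the form $q\rho_{s,t}q^{-1}$ by its reversal (such $q$ exists). Set $s'=qsq^{-1}$ and $t'=qtq^{-1}$ (so $(s',t'),(t',s')\in\mathfrak{N}$). Then $$\operatorname{Has}\vec b=\operatorname{Has}\vec a-(s',t')+(t',s')\quad\text{in }\mathbb{Z}[\mathfrak{N}].$$
   Context: $(W,S)$ is a Coxeter group (generators $S$, relations $(st)^{m_{s,t}}=1$ for $m_{s,t}<\infty$, $m_{s,s}=1$, $m_{s,t}=m_{t,s}\ge2$ for $s\ne t$). $T=\bigcup_{x\in W}xSx^{-1}$. For distinct $u,v\in T$, $m_{u,v}$ is the order of $uv$ and, if finite, $\rho_{u,v}=((uv)^0u,(uv)^1u,\ldots,(uv)^{m_{u,v}-1}u)$; $q\rho q^{-1}$ means conjugating each entry by $q$. $\mathfrak{M}=\{(s,t)\in S\times S: s\ne t,\ m_{s,t}<\infty\}$ and $\mathfrak{N}=\bigcup_{x\in W}x\mathfrak{M}x^{-1}\subseteq T\times T$ (conjugating both entries). Reduced expression: tuple $(a_1,\ldots,a_k)\in S^k$ with $w=a_1\cdots a_k$, $k$ minimal. An $(s,t)$-braid move replaces a contiguous factor $(s,t,s,\ldots)$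 of length $m_{s,t}$ by $(t,s,t,\ldots)$ of length $m_{s,t}$. $\operatorname{Invs}(a_1,\ldots,a_k)=(t_1,\ldots,t_k)$, $t_i=(a_1\cdots a_{i-1})a_i(a_1\cdots a_{i-1})^{-1}$. For $(u,v)\in\mathfrak{N}$ and a reduced expression $\vec a$, $\operatorname{has}_{u,v}\vec a=1$ if $\rho_{u,v}$ appears as a (not necessarily contiguous) subword of $\operatorname{Invs}\vec a$, and $0$ otherwise. $\mathbb{Z}[\mathfrak{N}]$ is the free $\mathbb{Z}$-module with basis $\mathfrak{N}$ and $\operatorname{Has}\vec a=\sum_{(u,v)\in\mathfrak{N}}\operatorname{has}_{u,v}\vec a\cdot(u,v)$. *)

theory Defs
  imports "HOL-Algebra.Multiplicative_Group" "HOL-Algebra.Generated_Groups"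
    "HOL-Library.Sublist" "HOL-Library.Extended_Nat"
begin

definition wprod :: "('g, 'b) monoid_scheme \<Rightarrow> 'g list \<Rightarrow> 'g" where
  "wprod G xs = foldr (\<lambda>x y. x \<otimes>\<^bsub>G\<^esub> y) xs \<one>\<^bsub>G\<^esub>"

definition alt :: "'g \<Rightarrow> 'g \<Rightarrow> nat \<Rightarrow> 'g list" where
  "alt s t k = map (\<lambda>i. if even i then s else t) [0..<k]"

inductive cox_rel :: "'g set \<Rightarrow> ('g \<Rightarrow> 'g \<Rightarrow> enat) \<Rightarrow> 'g list \<Rightarrow> 'g list \<Rightarrow> bool"
  for S m where
  refl: "x \<in> lists S \<Longrightarrow> cox_rel S m x x"
| sym: "cox_rel S m x y \<Longrightarrow> cox_rel S m y x"
| trans: "cox_rel S m x y \<Longrightarrow> cox_rel S m y z \<Longrightarrow> cox_rel S m x z"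
| square: "u \<in> lists S \<Longrightarrow> v \<in> lists S \<Longrightarrow> s \<in> S \<Longrightarrow>
     cox_rel S m (u @ [s, s] @ v) (u @ v)"
| braid: "u \<in> lists S \<Longrightarrow> v \<in> lists S \<Longrightarrow> s \<in> S \<Longrightarrow> t \<in> S \<Longrightarrow> s \<noteq> t \<Longrightarrow>
     m s t = enat k \<Longrightarrow> cox_rel S m (u @ alt s t (2 * k) @ v) (u @ v)"

(* (G,S) is a Coxeter system with Coxeter matrix m: G is the group presented by
   generators S and relations (s t)^{m s t} = 1 *)
definition coxeter_system ::
  "('g, 'b) monoid_scheme \<Rightarrow> 'g set \<Rightarrow> ('g \<Rightarrow> 'g \<Rightarrow> enat) \<Rightarrow> bool" where
  "coxeter_system G S m \<longleftrightarrow>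
     group G \<and> S \<subseteq> carrier G \<and> generate G S = carrier G \<and>
     (\<forall>s\<in>S. m s s = 1) \<and>
     (\<forall>s\<in>S. \<forall>t\<in>S. m s t = m t s) \<and>
     (\<forall>s\<in>S. \<forall>t\<in>S. s \<noteq> t \<longrightarrow> m s t \<ge> 2) \<and>
     (\<forall>x\<in>lists S. \<forall>y\<in>lists S. wprod G x = wprod G y \<longleftrightarrow> cox_rel S m x y)"

definition reflections :: "('g, 'b) monoid_scheme \<Rightarrow> 'g set \<Rightarrow> 'g set" where
  "reflections G S = {x \<otimes>\<^bsub>G\<^esub> s \<otimes>\<^bsub>G\<^esub> inv\<^bsub>G\<^esub> x | x s. x \<in> carrier G \<and> s \<in> S}"

definition rho :: "('g, 'b) monoid_scheme \<Rightarrow> 'g \<Rightarrow> 'g \<Rightarrow> 'g list" where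
  "rho G u v = map (\<lambda>i. (u \<otimes>\<^bsub>G\<^esub> v) [^]\<^bsub>G\<^esub> i \<otimes>\<^bsub>G\<^esub> u) [0..<group.ord G (u \<otimes>\<^bsub>G\<^esub> v)]"

definition conj :: "('g, 'b) monoid_scheme \<Rightarrow> 'g \<Rightarrow> 'g \<Rightarrow> 'g" where
  "conj G q x = q \<otimes>\<^bsub>G\<^esub> x \<otimes>\<^bsub>G\<^esub> inv\<^bsub>G\<^esub> q"

definition frakM :: "'g set \<Rightarrow> ('g \<Rightarrow> 'g \<Rightarrow> enat) \<Rightarrow> ('g \<times> 'g) set" where
  "frakM S m = {(s, t). s \<in> S \<and> t \<in> S \<and> s \<noteq> t \<and> m s t \<noteq> \<infinity>}"

definition frakN ::
  "('g, 'b) monoid_scheme \<Rightarrow> 'g set \<Rightarrow> ('g \<Rightarrow> 'g \<Rightarrow> enat) \<Rightarrow> ('g \<times> 'g) set" where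
  "frakN G S m = {(conj G x s, conj G x t) | x s t. x \<in> carrier G \<and> (s, t) \<in> frakM S m}"

definition reduced_expr :: "('g, 'b) monoid_scheme \<Rightarrow> 'g set \<Rightarrow> 'g list \<Rightarrow> 'g \<Rightarrow> bool" where
  "reduced_expr G S a w \<longleftrightarrow> a \<in> lists S \<and> wprod G a = w \<and>
     (\<forall>b\<in>lists S. wprod G b = w \<longrightarrow> length a \<le> length b)"

definition braid_move ::
  "('g \<Rightarrow> 'g \<Rightarrow> enat) \<Rightarrow> 'g \<Rightarrow> 'g \<Rightarrow> 'g list \<Rightarrow> 'g list \<Rightarrow> bool" where
  "braid_move m s t a b \<longleftrightarrow> (\<exists>u v k. m s t = enat k \<and>
     a = u @ alt s t k @ v \<and> b = u @ alt t s k @ v)"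

definition invs :: "('g, 'b) monoid_scheme \<Rightarrow> 'g list \<Rightarrow> 'g list" where
  "invs G a = map (\<lambda>i. conj G (wprod G (take i a)) (a ! i)) [0..<length a]"

definition has :: "('g, 'b) monoid_scheme \<Rightarrow> 'g \<Rightarrow> 'g \<Rightarrow> 'g list \<Rightarrow> int" where
  "has G u v a = (if subseq (rho G u v) (invs G a) then 1 else 0)"

(* Has a, as an element of Z[N] represented by its coefficient function
   (supported on N) *)
definition Has ::
  "('g, 'b) monoid_scheme \<Rightarrow> 'g set \<Rightarrow> ('g \<Rightarrow> 'g \<Rightarrow> enat) \<Rightarrow> 'g list \<Rightarrow> ('g \<times> 'g \<Rightarrow> int)" where
  "Has G S m a = (\<lambda>(u, v). if (u, v) \<in> frakN G S m then has G u v a else 0)"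

end

theory Submission
  imports Defs
begin

lemma wprod_Nil[simp]: "wprod G [] = \<one>\<^bsub>G\<^esub>" by (simp add: wprod_def)
lemma wprod_Cons[simp]: "wprod G (x#xs) = x \<otimes>\<^bsub>G\<^esub> wprod G xs" by (simp add: wprod_def)

locale coxsys = group G for G :: "('g,'b) monoid_scheme" (structure) +
  fixes S :: "'g set" and m :: "'g \<Rightarrow> 'g \<Rightarrow> enat"
  assumes cs: "coxeter_system G S m"
begin

lemma S_carrier: "S \<subseteq> carrier G" using cs by (simp add: coxeter_system_def)

lemma word_eq: "x \<in> lists S \<Longrightarrow> y \<in> lists S \<Longrightarrow> wprod G x = wprod G y \<longleftrightarrow> cox_rel S m x y"
  using cs by (simp add: coxeter_system_def)

lemma wprod_closed[simp]: "set xs \<subseteq> carrier G \<Longrightarrow> wprod G xs \<in> carrier G"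
  by (induction xs) auto

lemma wprod_append: "set xs \<subseteq> carrier G \<Longrightarrow> set ys \<subseteq> carrier G \<Longrightarrow>
   wprod G (xs @ ys) = wprod G xs \<otimes> wprod G ys"
  by (induction xs) (auto simp: m_assoc)

lemma lists_S_carrier: "xs \<in> lists S \<Longrightarrow> set xs \<subseteq> carrier G"
  using S_carrier by auto

lemma S_invol: assumes "s \<in> S" shows "s \<otimes> s = \<one>"
proof -
  have "cox_rel S m ([] @ [s, s] @ []) ([] @ [])" by (rule cox_rel.square) (use assms in auto)
  then have "wprod G [s,s] = wprod G []" using word_eq[of "[s,s]" "[]"] assms by auto
  thus ?thesis using assms S_carrier by auto
qed

lemma inv_S[simp]: "s \<in> S \<Longrightarrow> inv s = s"
  using S_invol S_carrier by (metis inv_equality subsetD)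

lemma wprod_rev: "xs \<in> lists S \<Longrightarrow> inv (wprod G xs) = wprod G (rev xs)"
proof (induction xs)
  case Nil then show ?case by simp
next
  case (Cons a xs)
  have c: "set xs \<subseteq> carrier G" "a \<in> carrier G" using Cons.prems S_carrier by auto
  have "inv (wprod G (a#xs)) = inv (wprod G xs) \<otimes> inv a" using c by (simp add: inv_mult_group)
  also have "\<dots> = wprod G (rev xs) \<otimes> wprod G [a]" using Cons c by simp
  also have "\<dots> = wprod G (rev (a#xs))" using c by (simp add: wprod_append)
  finally show ?case .
qed


lemma gen_words: assumes "g \<in> carrier G" shows "\<exists>x\<in>lists S. wprod G x = g"
proof -
  have gen: "generate G S = carrier G" using cs by (simp add: coxeter_system_def)
  have "g \<in> generate G S" using assms gen by simp
  then show ?thesis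
  proof (induction rule: generate.induct)
    case one then show ?case by (intro bexI[of _ "[]"]) auto
  next
    case (incl h) then show ?case by (intro bexI[of _ "[h]"]) (use S_carrier in auto)
  next
    case (inv h) then show ?case by (intro bexI[of _ "[h]"]) (use S_carrier in auto)
  next
    case (eng h1 h2)
    then obtain x1 x2 where "x1 \<in> lists S" "x2 \<in> lists S" "wprod G x1 = h1" "wprod G x2 = h2" by blast
    then show ?case by (intro bexI[of _ "x1 @ x2"]) (auto simp: wprod_append lists_S_carrier)
  qed
qed

lemma length_alt[simp]: "length (alt s t n) = n" by (simp add: alt_def)
lemma nth_alt[simp]: "i < n \<Longrightarrow> alt s t n ! i = (if even i then s else t)" by (simp add: alt_def)
lemma set_alt: "x \<in> set (alt s t n) \<Longrightarrow> x = s \<or> x = t" by (auto simp: alt_def)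
lemma alt_0[simp]: "alt s t 0 = []" by (simp add: alt_def)
lemma alt_Suc: "alt s t (Suc n) = s # alt t s n"
  by (rule nth_equalityI) (auto simp: nth_Cons split: nat.splits)
lemma alt_snoc: "alt s t (Suc n) = alt s t n @ [if even n then s else t]"
  by (rule nth_equalityI) (auto simp: nth_append less_Suc_eq)
lemma alt_add_even: "alt s t (2*k + j) = alt s t (2*k) @ alt s t j"
  by (rule nth_equalityI) (auto simp: nth_append)

lemma cox_rel_lists: "cox_rel S m x y \<Longrightarrow> x \<in> lists S \<and> y \<in> lists S"
  by (induction rule: cox_rel.induct) (auto dest!: set_alt)

lemma parity_inv: assumes "x \<in> lists S" "y \<in> lists S" "wprod G x = wprod G y"
  shows "even (length x) = even (length y)"
proof -
  have "cox_rel S m x y" using word_eq assms by blast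
  then show ?thesis by (induction rule: cox_rel.induct) auto
qed

definition par :: "'g \<Rightarrow> bool" where
  "par g = odd (length (SOME x. x \<in> lists S \<and> wprod G x = g))"

lemma par_wprod: assumes "x \<in> lists S" shows "par (wprod G x) = odd (length x)"
proof -
  let ?y = "SOME y. y \<in> lists S \<and> wprod G y = wprod G x"
  have "?y \<in> lists S \<and> wprod G ?y = wprod G x" by (rule someI[of _ x]) (use assms in auto)
  then show ?thesis unfolding par_def using parity_inv[of ?y x] assms by auto
qed

lemma par_mult: assumes "a \<in> carrier G" "b \<in> carrier G" shows "par (a \<otimes> b) = (par a \<noteq> par b)"
proof -
  obtain x y where "x \<in> lists S" "y \<in> lists S" "wprod G x = a" "wprod G y = b"
    using gen_words assms by metis
  then show ?thesis using par_wprod[of "x@y"] par_wprod[of x] par_wprod[of y]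
    by (auto simp: wprod_append lists_S_carrier)
qed

lemma par_inv: assumes "a \<in> carrier G" shows "par (inv a) = par a"
proof -
  obtain x where "x \<in> lists S" "wprod G x = a" using gen_words assms by metis
  then have "inv a = wprod G (rev x)" using wprod_rev by auto
  then show ?thesis using par_wprod[of "rev x"] par_wprod[of x] \<open>x \<in> lists S\<close> \<open>wprod G x = a\<close> by (auto simp: in_lists_conv_set)
qed

lemma par_S: "s \<in> S \<Longrightarrow> par s" using par_wprod[of "[s]"] S_carrier by auto
lemma par_one: "\<not> par \<one>" using par_wprod[of "[]"] by simp
lemma S_ne_one: "s \<in> S \<Longrightarrow> s \<noteq> \<one>" using par_S par_one by auto


lemma inv_cancel_l[simp]: "x \<in> carrier G \<Longrightarrow> y \<in> carrier G \<Longrightarrow> inv x \<otimes> (x \<otimes> y) = y"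
  by (metis l_inv l_one m_assoc inv_closed)
lemma inv_cancel_r[simp]: "x \<in> carrier G \<Longrightarrow> y \<in> carrier G \<Longrightarrow> x \<otimes> (inv x \<otimes> y) = y"
  by (metis r_inv l_one m_assoc inv_closed)

lemma wprod_take_closed[simp]: "set xs \<subseteq> carrier G \<Longrightarrow> wprod G (take i xs) \<in> carrier G"
  by (meson set_take_subset subset_trans wprod_closed)
lemma nth_closed'[simp]: "set xs \<subseteq> carrier G \<Longrightarrow> i < length xs \<Longrightarrow> xs ! i \<in> carrier G"
  by (meson nth_mem subsetD)
lemma conj_1[simp]: "a \<in> carrier G \<Longrightarrow> conj G a \<one> = \<one>" by (simp add: conj_def)

lemma conj_closed[simp]: "a \<in> carrier G \<Longrightarrow> b \<in> carrier G \<Longrightarrow> conj G a b \<in> carrier G"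
  by (simp add: conj_def)
lemma conj_one[simp]: "b \<in> carrier G \<Longrightarrow> conj G \<one> b = b" by (simp add: conj_def)
lemma conj_mult: "a \<in> carrier G \<Longrightarrow> b \<in> carrier G \<Longrightarrow> c \<in> carrier G \<Longrightarrow>
   conj G (a \<otimes> b) c = conj G a (conj G b c)"
  by (simp add: conj_def m_assoc inv_mult_group)
lemma conj_hom: "a \<in> carrier G \<Longrightarrow> b \<in> carrier G \<Longrightarrow> c \<in> carrier G \<Longrightarrow>
   conj G a (b \<otimes> c) = conj G a b \<otimes> conj G a c"
  by (simp add: conj_def m_assoc)
lemma conj_inv: "a \<in> carrier G \<Longrightarrow> b \<in> carrier G \<Longrightarrow> conj G a (inv b) = inv (conj G a b)"
  by (simp add: conj_def m_assoc inv_mult_group)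
lemma conj_inj: "a \<in> carrier G \<Longrightarrow> b \<in> carrier G \<Longrightarrow> c \<in> carrier G \<Longrightarrow>
   conj G a b = conj G a c \<Longrightarrow> b = c"
  unfolding conj_def by (metis inv_closed m_closed Units_l_cancel Units_eq right_cancel)
lemma conj_pow: "a \<in> carrier G \<Longrightarrow> b \<in> carrier G \<Longrightarrow> conj G a (b [^] (n::nat)) = (conj G a b) [^] n"
  by (induction n) (simp_all add: conj_hom)
lemma conj_self_S: "s \<in> S \<Longrightarrow> conj G s s = s"
  using S_carrier by (auto simp: conj_def S_invol)

lemma invs_length[simp]: "length (invs G x) = length x" by (simp add: invs_def)
lemma invs_nth: "i < length x \<Longrightarrow> invs G x ! i = conj G (wprod G (take i x)) (x!i)"
  by (simp add: invs_def)
lemma invs_Nil[simp]: "invs G [] = []" by (simp add: invs_def)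
lemma invs_Cons: assumes "set (x#xs) \<subseteq> carrier G"
  shows "invs G (x#xs) = x # map (conj G x) (invs G xs)"
proof (rule nth_equalityI)
  fix i assume "i < length (invs G (x#xs))"
  then show "invs G (x#xs) ! i = (x # map (conj G x) (invs G xs)) ! i"
    using assms by (cases i) (auto simp: invs_nth conj_mult)
qed simp

lemma invs_append: assumes "set x \<subseteq> carrier G" "set y \<subseteq> carrier G"
  shows "invs G (x@y) = invs G x @ map (conj G (wprod G x)) (invs G y)"
  using assms(1)
proof (induction x)
  case Nil
  have "map (conj G \<one>) (invs G y) = invs G y"
    by (rule map_idI) (use assms(2) in \<open>auto simp: invs_def\<close>)
  then show ?case by simp
next
  case (Cons a x)
  have si: "set (invs G y) \<subseteq> carrier G"
    using assms(2) by (auto simp: invs_def)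
  show ?case using Cons assms(2) si by (auto simp: invs_Cons conj_mult)
qed

lemma set_invs: "set x \<subseteq> carrier G \<Longrightarrow> set (invs G x) \<subseteq> carrier G"
  by (auto simp: invs_def)


lemma lcancel: "x \<in> carrier G \<Longrightarrow> y \<in> carrier G \<Longrightarrow> z \<in> carrier G \<Longrightarrow> (x \<otimes> y = x \<otimes> z) = (y = z)"
  by (metis Units_eq Units_l_cancel)

lemma alt_lists: "s \<in> S \<Longrightarrow> t \<in> S \<Longrightarrow> alt s t n \<in> lists S"
  by (auto dest!: set_alt)

lemma map_conj_one: "set xs \<subseteq> carrier G \<Longrightarrow> map (conj G \<one>) xs = xs"
  by (induction xs) auto

lemma invs_alt: assumes "s \<in> S" "t \<in> S" "i < n"
  shows "invs G (alt s t n) ! i = wprod G (alt s t (2*i+1))"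
  using assms
proof (induction i arbitrary: s t n)
  case 0
  then obtain n' where n: "n = Suc n'" by (cases n) auto
  have c: "set (alt s t n) \<subseteq> carrier G" using alt_lists 0 lists_S_carrier by blast
  show ?case using 0 c S_carrier by (auto simp: n alt_Suc invs_Cons)
next
  case (Suc i)
  then obtain n' where n: "n = Suc n'" by (cases n) auto
  have c: "set (alt s t n) \<subseteq> carrier G" "set (alt t s n') \<subseteq> carrier G" "set (alt t s (2*i+1)) \<subseteq> carrier G"
    using alt_lists Suc lists_S_carrier by blast+
  have sc: "s \<in> carrier G" "t \<in> carrier G" using Suc S_carrier by auto
  have "invs G (alt s t n) ! Suc i = conj G s (invs G (alt t s n') ! i)"
    using c Suc n by (auto simp: n alt_Suc invs_Cons)
  also have "\<dots> = conj G s (wprod G (alt t s (2*i+1)))" using Suc n by simp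
  also have "\<dots> = s \<otimes> (wprod G (alt t s (2*i+1)) \<otimes> s)"
    using sc c Suc by (simp add: conj_def m_assoc)
  also have "\<dots> = wprod G (alt s t (2 * Suc i + 1))"
  proof -
    have "alt s t (2 * Suc i + 1) = s # alt t s (Suc (2*i+1))" by (simp add: alt_Suc)
    also have "\<dots> = s # (alt t s (2*i+1) @ [s])" by (simp only: alt_snoc) simp
    finally show ?thesis using c sc by (simp add: wprod_append)
  qed
  finally show ?case .
qed

lemma alt_one: assumes "s \<in> S" "t \<in> S" "s \<noteq> t" "m s t = enat k"
  shows "wprod G (alt s t (2*k)) = \<one>"
proof -
  have "cox_rel S m ([] @ alt s t (2*k) @ []) ([] @ [])" by (rule cox_rel.braid) (use assms in auto)
  then show ?thesis using word_eq[of "alt s t (2*k)" "[]"] alt_lists assms by auto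
qed

lemma invs_alt_double: assumes "s \<in> S" "t \<in> S" "s \<noteq> t" "m s t = enat k"
  shows "invs G (alt s t (2*k)) = take k (invs G (alt s t (2*k))) @ take k (invs G (alt s t (2*k)))"
proof (rule nth_equalityI)
  fix i assume i: "i < length (invs G (alt s t (2*k)))"
  show "invs G (alt s t (2*k)) ! i = (take k (invs G (alt s t (2*k))) @ take k (invs G (alt s t (2*k)))) ! i"
  proof (cases "i < k")
    case True then show ?thesis by (simp add: nth_append)
  next
    case False
    define j where "j = i - k"
    have ij: "i = k + j" "j < k" using False i j_def by auto
    have c: "set (alt s t (2*k)) \<subseteq> carrier G" "set (alt s t (2*j+1)) \<subseteq> carrier G"
      using alt_lists assms lists_S_carrier by blast+
    have "invs G (alt s t (2*k)) ! i = wprod G (alt s t (2*k + (2*j+1)))"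
      using invs_alt[of s t i "2*k"] assms ij by (simp add: algebra_simps)
    also have "\<dots> = wprod G (alt s t (2*j+1))"
      by (subst alt_add_even[of s t k "2*j+1"]) (use c alt_one[OF assms] in \<open>simp add: wprod_append\<close>)
    also have "\<dots> = invs G (alt s t (2*k)) ! j" using invs_alt[of s t j "2*k"] assms ij by simp
    finally show ?thesis using ij by (simp add: nth_append)
  qed
qed simp

lemma cocycle: "cox_rel S m x y \<Longrightarrow> even (count_list (invs G x) r) = even (count_list (invs G y) r)"
proof (induction rule: cox_rel.induct)
  case (square u v s)
  have c: "set u \<subseteq> carrier G" "set v \<subseteq> carrier G" "s \<in> carrier G"
    using square lists_S_carrier S_carrier by auto
  have si: "set (invs G v) \<subseteq> carrier G" using set_invs c by blast
  have "invs G (u @ [s,s] @ v) = invs G u @ map (conj G (wprod G u)) ([s,s] @ invs G v)"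
    using c si by (simp add: invs_append invs_Cons conj_self_S square S_invol map_conj_one
       del: append.simps)
  then show ?case using c by (simp add: invs_append)
next
  case (braid u v s t k)
  let ?A = "alt s t (2*k)"
  let ?B = "take k (invs G ?A)"
  have c: "set u \<subseteq> carrier G" "set v \<subseteq> carrier G" "set ?A \<subseteq> carrier G"
    using braid lists_S_carrier alt_lists by blast+
  have si: "set (invs G v) \<subseteq> carrier G" using set_invs c by blast
  have "invs G (u @ ?A @ v) = invs G u @ map (conj G (wprod G u)) ((?B @ ?B) @ invs G v)"
    using c si by (simp add: invs_append alt_one[OF braid(3-6)] map_conj_one
        flip: invs_alt_double[OF braid(3-6)])
  then show ?case using c by (simp add: invs_append even_add) blast
qed auto


lemma count_list_distinct: "distinct xs \<Longrightarrow> r \<in> set xs \<Longrightarrow> count_list xs r = 1"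
  by (induction xs) auto

lemma cocycle_eq: "x \<in> lists S \<Longrightarrow> y \<in> lists S \<Longrightarrow> wprod G x = wprod G y \<Longrightarrow>
  even (count_list (invs G x) r) = even (count_list (invs G y) r)"
  using cocycle word_eq by blast

definition len :: "'g \<Rightarrow> nat" where
  "len g = (LEAST n. \<exists>x\<in>lists S. length x = n \<and> wprod G x = g)"

lemma len_le: "x \<in> lists S \<Longrightarrow> len (wprod G x) \<le> length x"
  unfolding len_def by (rule Least_le) auto

lemma len_word: assumes "g \<in> carrier G" shows "\<exists>x\<in>lists S. length x = len g \<and> wprod G x = g"
proof -
  obtain x where "x \<in> lists S" "wprod G x = g" using gen_words assms by blast
  then have "\<exists>n. \<exists>x\<in>lists S. length x = n \<and> wprod G x = g" by blast
  from LeastI_ex[OF this] show ?thesis unfolding len_def .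
qed

lemma reduced_iff: "reduced_expr G S x g \<longleftrightarrow> x \<in> lists S \<and> wprod G x = g \<and> length x = len g"
proof
  assume r: "reduced_expr G S x g"
  then have x: "x \<in> lists S" "wprod G x = g" by (auto simp: reduced_expr_def)
  then have "g \<in> carrier G" using lists_S_carrier wprod_closed by blast
  then obtain y where "y \<in> lists S" "length y = len g" "wprod G y = g" using len_word by blast
  then have "length x \<le> len g" using r by (auto simp: reduced_expr_def)
  moreover have "len g \<le> length x" using len_le x by blast
  ultimately show "x \<in> lists S \<and> wprod G x = g \<and> length x = len g" using x by auto
next
  assume "x \<in> lists S \<and> wprod G x = g \<and> length x = len g"
  then show "reduced_expr G S x g" using len_le unfolding reduced_expr_def by (metis in_listsI)
qed

lemma S_invol_cancel: "s \<in> S \<Longrightarrow> R \<in> carrier G \<Longrightarrow> s \<otimes> (s \<otimes> R) = R"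
  using S_invol S_carrier by (metis m_assoc l_one subsetD)

lemma del_alg: assumes "set A \<subseteq> carrier G" "set B \<subseteq> carrier G" "set C \<subseteq> carrier G" "a \<in> S" "b \<in> S"
  and eq: "conj G (wprod G A) a = conj G (wprod G (A @ a # B)) b"
  shows "wprod G (A @ a # B @ b # C) = wprod G (A @ B @ C)"
proof -
  have ab: "a \<in> carrier G" "b \<in> carrier G" using assms S_carrier by auto
  define P Q R where "P = wprod G A" "Q = wprod G B" "R = wprod G C"
  have c: "P \<in> carrier G" "Q \<in> carrier G" "R \<in> carrier G" using assms by (auto simp: P_Q_R_def)
  have "conj G P a = conj G P (conj G (a \<otimes> Q) b)"
    using eq assms ab c by (simp add: P_Q_R_def wprod_append conj_mult)
  then have e1: "a = conj G (a \<otimes> Q) b" by (rule conj_inj[rotated 3]) (use c ab in auto)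
  have "a \<otimes> (a \<otimes> Q) = (a \<otimes> Q) \<otimes> b"
  proof -
    have "a \<otimes> (a \<otimes> Q) = conj G (a \<otimes> Q) b \<otimes> (a \<otimes> Q)" using e1 by simp
    also have "\<dots> = (a \<otimes> Q) \<otimes> b" using c ab by (simp add: conj_def m_assoc)
    finally show ?thesis .
  qed
  then have e2: "Q = a \<otimes> (Q \<otimes> b)" using c ab assms by (simp add: m_assoc S_invol_cancel)
  have "wprod G (A @ a # B @ b # C) = P \<otimes> (a \<otimes> (Q \<otimes> b) \<otimes> R)"
    using assms ab c by (simp add: P_Q_R_def wprod_append m_assoc)
  also have "\<dots> = P \<otimes> (Q \<otimes> R)" using e2[symmetric] by simp
  also have "\<dots> = wprod G (A @ B @ C)" using assms by (simp add: P_Q_R_def wprod_append)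
  finally show ?thesis .
qed

lemma deletion: assumes x: "x \<in> lists S" and nd: "\<not> distinct (invs G x)"
  shows "\<exists>x'. set x' \<subseteq> set x \<and> length x' + 2 = length x \<and> wprod G x' = wprod G x"
proof -
  obtain i j where ij: "i < j" "j < length x" "invs G x ! i = invs G x ! j"
    using nd by (auto simp: distinct_conv_nth) (metis linorder_neqE_nat)
  define A a B b C where "A = take i x" "a = x ! i" "B = take (j - Suc i) (drop (Suc i) x)"
    "b = x ! j" "C = drop (Suc j) x"
  have dec: "x = A @ a # B @ b # C"
  proof -
    have "x = take i x @ x!i # drop (Suc i) x" using ij by (intro id_take_nth_drop) simp
    moreover have "drop (Suc i) x = B @ b # C"
    proof -
      have "j - Suc i < length (drop (Suc i) x)" using ij by simp
      then have "drop (Suc i) x = take (j - Suc i) (drop (Suc i) x) @ (drop (Suc i) x) ! (j - Suc i)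
          # drop (Suc (j - Suc i)) (drop (Suc i) x)" by (rule id_take_nth_drop)
      then show ?thesis using ij by (simp add: A_a_B_b_C_def)
    qed
    ultimately show ?thesis unfolding A_a_B_b_C_def(1,2) by argo
  qed
  have lA: "length A = i" "length B = j - Suc i" using ij by (auto simp: A_a_B_b_C_def)
  have jj: "j = length A + Suc (length B)" using lA ij by simp
  have tj: "take j x = A @ a # B" by (subst dec) (simp add: jj)
  have sets: "set A \<subseteq> set x" "set B \<subseteq> set x" "set C \<subseteq> set x" "a \<in> set x" "b \<in> set x"
  proof -
    have "set x = set A \<union> {a} \<union> set B \<union> {b} \<union> set C" by (subst dec) auto
    then show "set A \<subseteq> set x" "set B \<subseteq> set x" "set C \<subseteq> set x" "a \<in> set x" "b \<in> set x" by auto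
  qed
  have xc: "set x \<subseteq> carrier G" using x lists_S_carrier by blast
  have "conj G (wprod G A) a = conj G (wprod G (A @ a # B)) b"
  proof -
    have "invs G x ! i = conj G (wprod G A) a" using ij by (simp add: invs_nth A_a_B_b_C_def)
    moreover have "invs G x ! j = conj G (wprod G (A @ a # B)) b"
      using ij by (simp only: invs_nth tj A_a_B_b_C_def(4))
    ultimately show ?thesis using ij(3) by argo
  qed
  then have "wprod G (A @ a # B @ b # C) = wprod G (A @ B @ C)"
    by (rule del_alg[rotated 5]) (use sets xc x in auto)
  then show ?thesis using dec sets lA ij by (intro exI[of _ "A @ B @ C"]) auto
qed

lemma reduced_distinct: assumes "x \<in> lists S" "length x = len (wprod G x)"
  shows "distinct (invs G x)"
proof (rule ccontr)
  assume "\<not> distinct (invs G x)"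
  then obtain x' where "set x' \<subseteq> set x" "length x' + 2 = length x" "wprod G x' = wprod G x"
    using deletion assms by blast
  moreover have "x' \<in> lists S" using calculation assms by auto
  ultimately show False using len_le[of x'] assms by auto
qed

lemma distinct_reduced: assumes x: "x \<in> lists S" and d: "distinct (invs G x)"
  and y: "y \<in> lists S" "wprod G y = wprod G x"
  shows "length x \<le> length y"
proof -
  have "set (invs G x) \<subseteq> set (invs G y)"
  proof
    fix r assume r: "r \<in> set (invs G x)"
    then have "count_list (invs G x) r = 1" using d by (simp add: count_list_distinct)
    then have "odd (count_list (invs G y) r)" using cocycle_eq[OF x y(1), of r] y(2) by simp
    then show "r \<in> set (invs G y)" using count_notin by fastforce
  qed
  then have "card (set (invs G x)) \<le> card (set (invs G y))" by (simp add: card_mono)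
  also have "\<dots> \<le> length y" using card_length[of "invs G y"] by simp
  finally show ?thesis using d distinct_card by fastforce
qed

lemma distinct_len: assumes "x \<in> lists S" "distinct (invs G x)" shows "length x = len (wprod G x)"
proof -
  have "wprod G x \<in> carrier G" using assms lists_S_carrier wprod_closed by blast
  then obtain y where "y \<in> lists S" "length y = len (wprod G x)" "wprod G y = wprod G x"
    using len_word by blast
  then have "length x \<le> len (wprod G x)" using distinct_reduced assms by metis
  then show ?thesis using len_le[OF assms(1)] by simp
qed

lemma exchange: assumes "x \<in> lists S" "i < length x"
  shows "invs G x ! i \<otimes> wprod G x = wprod G (take i x @ drop (Suc i) x)"
proof -
  have xc: "set x \<subseteq> carrier G" using assms lists_S_carrier by blast
  have xi: "x ! i \<in> S" using assms by auto
  have dc: "set (drop (Suc i) x) \<subseteq> carrier G" using xc by (meson set_drop_subset subset_trans)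
  define P R where "P = wprod G (take i x)" "R = wprod G (drop (Suc i) x)"
  have c: "P \<in> carrier G" "R \<in> carrier G" "x!i \<in> carrier G" using xc dc assms by (auto simp: P_R_def)
  have tc: "set (take i x) \<subseteq> carrier G" using xc by (meson set_take_subset subset_trans)
  have e: "x = take i x @ x!i # drop (Suc i) x" by (rule id_take_nth_drop[OF assms(2)])
  have "wprod G x = wprod G (take i x @ x!i # drop (Suc i) x)" using e by (rule arg_cong)
  also have "\<dots> = P \<otimes> (x!i \<otimes> R)" using tc dc c by (simp add: wprod_append P_R_def)
  finally have "wprod G x = P \<otimes> (x!i \<otimes> R)" .
  then have "invs G x ! i \<otimes> wprod G x = P \<otimes> x!i \<otimes> inv P \<otimes> (P \<otimes> (x!i \<otimes> R))"
    using assms by (simp add: invs_nth conj_def P_R_def)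
  also have "\<dots> = P \<otimes> R" using c xi by (simp add: m_assoc S_invol_cancel)
  also have "\<dots> = wprod G (take i x @ drop (Suc i) x)" using tc dc by (simp add: P_R_def wprod_append)
  finally show ?thesis .
qed

lemma invs_inj: assumes "set x \<subseteq> carrier G" "set y \<subseteq> carrier G" "invs G x = invs G y"
  shows "x = y"
proof -
  have l: "length x = length y" using assms(3) by (metis invs_length)
  have "\<forall>i \<le> length x. take i x = take i y"
  proof (intro allI impI)
    fix i show "i \<le> length x \<Longrightarrow> take i x = take i y"
    proof (induction i)
      case 0 then show ?case by simp
    next
      case (Suc i)
      then have i: "i < length x" by simp
      have e: "conj G (wprod G (take i x)) (x!i) = conj G (wprod G (take i x)) (y!i)"
        using assms(3) i l Suc by (metis invs_nth Suc_leD)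
      have "x ! i = y ! i" by (rule conj_inj[OF _ _ _ e]) (use assms i l in auto)
      then show ?case using Suc i l by (simp add: take_Suc_conv_app_nth)
    qed
  qed
  then show ?thesis using l by (metis order_refl take_all)
qed


definition Wg :: "'g set \<Rightarrow> 'g set" where "Wg A = wprod G ` lists A"

lemma Wg_carrier: "A \<subseteq> carrier G \<Longrightarrow> Wg A \<subseteq> carrier G"
  by (auto simp: Wg_def intro!: wprod_closed)
lemma Wg_one: "\<one> \<in> Wg A" by (auto simp: Wg_def intro!: image_eqI[of _ _ "[]"])
lemma Wg_incl: "A \<subseteq> carrier G \<Longrightarrow> a \<in> A \<Longrightarrow> a \<in> Wg A"
  by (auto simp: Wg_def intro!: image_eqI[of _ _ "[a]"])
lemma Wg_mult: "A \<subseteq> carrier G \<Longrightarrow> g \<in> Wg A \<Longrightarrow> h \<in> Wg A \<Longrightarrow> g \<otimes> h \<in> Wg A"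
proof -
  assume A: "A \<subseteq> carrier G" "g \<in> Wg A" "h \<in> Wg A"
  then obtain x y where "x \<in> lists A" "y \<in> lists A" "g = wprod G x" "h = wprod G y" by (auto simp: Wg_def)
  moreover have "set x \<subseteq> carrier G" "set y \<subseteq> carrier G" using A(1) calculation by auto
  ultimately show ?thesis by (auto simp: Wg_def wprod_append intro!: image_eqI[of _ _ "x @ y"])
qed

lemma wprod_rev_gen: "set l \<subseteq> carrier G \<Longrightarrow> (\<forall>a\<in>set l. a \<otimes> a = \<one>) \<Longrightarrow> inv (wprod G l) = wprod G (rev l)"
proof (induction l)
  case Nil then show ?case by simp
next
  case (Cons a l)
  have "inv a = a" using Cons.prems by (metis inv_equality list.set_intros(1) subsetD)
  then show ?case using Cons by (simp add: inv_mult_group wprod_append)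
qed

lemma Wg_inv: "A \<subseteq> carrier G \<Longrightarrow> \<forall>a\<in>A. a \<otimes> a = \<one> \<Longrightarrow> g \<in> Wg A \<Longrightarrow> inv g \<in> Wg A"
proof -
  assume A: "A \<subseteq> carrier G" "\<forall>a\<in>A. a \<otimes> a = \<one>" "g \<in> Wg A"
  then obtain x where x: "x \<in> lists A" "g = wprod G x" by (auto simp: Wg_def)
  then have "inv g = wprod G (rev x)" using A wprod_rev_gen[of x] by auto
  then show ?thesis using x by (auto simp: Wg_def)
qed

lemma Wg_pow: "A \<subseteq> carrier G \<Longrightarrow> g \<in> Wg A \<Longrightarrow> g [^] (n::nat) \<in> Wg A"
  by (induction n) (auto simp: Wg_one Wg_mult)

lemma Wg_sub: "B \<subseteq> carrier G \<Longrightarrow> A \<subseteq> Wg B \<Longrightarrow> Wg A \<subseteq> Wg B"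
proof
  fix g assume B: "B \<subseteq> carrier G" "A \<subseteq> Wg B" "g \<in> Wg A"
  then obtain x where x: "x \<in> lists A" "g = wprod G x" by (auto simp: Wg_def)
  have "wprod G x \<in> Wg B" using x(1) by (induction x) (use B in \<open>auto simp: Wg_one Wg_mult\<close>)
  then show "g \<in> Wg B" using x by simp
qed

lemma wprod_map_conj: "set l \<subseteq> carrier G \<Longrightarrow> c \<in> carrier G \<Longrightarrow>
  conj G c (wprod G l) = wprod G (map (conj G c) l)"
  by (induction l) (auto simp: conj_hom)

lemma Wg_conj: assumes "A \<subseteq> carrier G" "c \<in> carrier G" shows "conj G c ` Wg A = Wg (conj G c ` A)"
proof
  show "conj G c ` Wg A \<subseteq> Wg (conj G c ` A)"
  proof
    fix g assume "g \<in> conj G c ` Wg A"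
    then obtain x where x: "x \<in> lists A" "g = conj G c (wprod G x)" by (auto simp: Wg_def)
    then have "g = wprod G (map (conj G c) x)" using assms wprod_map_conj[of x c] by auto
    moreover have "map (conj G c) x \<in> lists (conj G c ` A)" using x by auto
    ultimately show "g \<in> Wg (conj G c ` A)" by (auto simp: Wg_def)
  qed
  show "Wg (conj G c ` A) \<subseteq> conj G c ` Wg A"
  proof
    fix g assume "g \<in> Wg (conj G c ` A)"
    then obtain x' where x': "x' \<in> lists (conj G c ` A)" "g = wprod G x'" by (auto simp: Wg_def)
    then obtain x where x: "x \<in> lists A" "x' = map (conj G c) x" by (metis imageE lists_image)
    moreover have "set x \<subseteq> carrier G" using x assms by auto
    ultimately have "g = conj G c (wprod G x)" using x' assms wprod_map_conj[of x c] by auto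
    then show "g \<in> conj G c ` Wg A" using x by (auto simp: Wg_def)
  qed
qed

lemma Wg_conj_mem: "A \<subseteq> carrier G \<Longrightarrow> \<forall>a\<in>A. a \<otimes> a = \<one> \<Longrightarrow> g \<in> Wg A \<Longrightarrow> h \<in> Wg A \<Longrightarrow>
  conj G g h \<in> Wg A"
  unfolding conj_def by (intro Wg_mult Wg_inv) auto

lemma S_sub_invol: "J \<subseteq> S \<Longrightarrow> J \<subseteq> carrier G \<and> (\<forall>a\<in>J. a \<otimes> a = \<one>)"
  using S_carrier S_invol by blast

lemma invs_in_Wg: assumes "J \<subseteq> S" "y \<in> lists J" shows "set (invs G y) \<subseteq> Wg J"
proof
  fix r assume "r \<in> set (invs G y)"
  then obtain j where j: "j < length y" "r = invs G y ! j" by (auto simp: in_set_conv_nth)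
  have Jc: "J \<subseteq> carrier G" "\<forall>a\<in>J. a \<otimes> a = \<one>" using S_sub_invol assms by auto
  have "wprod G (take j y) \<in> Wg J" using assms(2) by (auto simp: Wg_def intro!: image_eqI[of _ _ "take j y"])
    (meson in_listsD in_listsI in_set_takeD)
  moreover have "y ! j \<in> Wg J" using Wg_incl Jc j assms(2) by auto
  ultimately show "r \<in> Wg J" using j Wg_conj_mem[OF Jc] by (simp add: invs_nth)
qed


lemma key12:
  assumes J: "J \<subseteq> S" and z: "z \<in> carrier G" and zmin: "\<forall>g\<in>Wg J. len z \<le> len (z \<otimes> g)"
    and v: "v \<in> Wg J" and s0: "s0 \<in> S" and e: "s0 \<otimes> z = z \<otimes> v"
  shows "v \<in> J"
proof -
  have Jc: "J \<subseteq> carrier G" "\<forall>a\<in>J. a \<otimes> a = \<one>" using S_sub_invol J by auto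
  have vc: "v \<in> carrier G" using v Wg_carrier Jc by blast
  have s0c: "s0 \<in> carrier G" using s0 S_carrier by blast
  define P where "P n \<longleftrightarrow> (\<exists>y\<in>lists J. length y = n \<and> wprod G y = v)" for n
  have "\<exists>n. P n" using v by (auto simp: Wg_def P_def)
  then have "P (LEAST n. P n)" by (rule LeastI_ex)
  then obtain y where y: "y \<in> lists J" "length y = (LEAST n. P n)" "wprod G y = v"
    unfolding P_def by blast
  have ymin: "length y \<le> length y'" if "y' \<in> lists J" "wprod G y' = v" for y'
    using y(2) Least_le[of P "length y'"] that by (auto simp: P_def)
  obtain x where x: "x \<in> lists S" "length x = len z" "wprod G x = z" using len_word z by blast
  have yS: "y \<in> lists S" using y J by auto
  have xc: "set x \<subseteq> carrier G" "set y \<subseteq> carrier G" using x yS lists_S_carrier by auto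
  have dx: "distinct (invs G x)" using reduced_distinct x by simp
  have dy: "distinct (invs G y)"
  proof (rule ccontr)
    assume "\<not> ?thesis"
    then obtain y' where y': "set y' \<subseteq> set y" "length y' + 2 = length y" "wprod G y' = wprod G y"
      using deletion yS by blast
    then have "y' \<in> lists J" using y(1) by auto
    then show False using ymin[of y'] y' y by auto
  qed
  have disj: "set (invs G x) \<inter> set (map (conj G z) (invs G y)) = {}"
  proof (rule ccontr)
    assume "set (invs G x) \<inter> set (map (conj G z) (invs G y)) \<noteq> {}"
    then obtain i j where i: "i < length x" "j < length y" "invs G x ! i = conj G z (invs G y ! j)"
      by (auto simp: in_set_conv_nth)
    define h where "h = invs G y ! j"
    have h: "h \<in> Wg J" using invs_in_Wg[OF J y(1)] i(2) by (auto simp: h_def)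
    have hc: "h \<in> carrier G" using h Wg_carrier Jc by blast
    have "invs G x ! i \<otimes> z = z \<otimes> h" using i(3) z hc by (simp add: conj_def m_assoc h_def)
    moreover have "invs G x ! i \<otimes> z = wprod G (take i x @ drop (Suc i) x)"
      using exchange[OF x(1) i(1)] x(3) by simp
    moreover have "take i x @ drop (Suc i) x \<in> lists S" using x(1) by (auto dest: in_set_takeD in_set_dropD)
    ultimately have "len (z \<otimes> h) \<le> length (take i x @ drop (Suc i) x)"
      using len_le[of "take i x @ drop (Suc i) x"] by simp
    also have "\<dots> < len z" using i x by simp
    finally show False using zmin h by force
  qed
  have inj: "inj_on (conj G z) (set (invs G y))"
    using set_invs[OF xc(2)] conj_inj[OF z] unfolding inj_on_def by blast
  have dxy: "distinct (invs G (x @ y))"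
    using dx dy disj inj xc by (simp add: invs_append distinct_map x(3))
  have xyS: "x @ y \<in> lists S" using x yS by auto
  have "length (x @ y) = len (z \<otimes> v)" using distinct_len[OF xyS dxy] xc x y by (simp add: wprod_append)
  also have "z \<otimes> v = wprod G (s0 # x)" using e x by simp
  also have "len (wprod G (s0 # x)) \<le> length x + 1" using len_le[of "s0 # x"] x s0 by simp
  finally have ly: "length y \<le> 1" by simp
  show ?thesis
  proof (cases y)
    case Nil
    then have "v = \<one>" using y by simp
    then have "s0 = \<one>" using e z s0c by simp
    then show ?thesis using S_ne_one s0 by blast
  next
    case (Cons a y')
    then have "y' = []" using ly by simp
    then have "v = a" using Cons y Jc by auto
    then show ?thesis using Cons y by auto
  qed
qed

lemma crux:
  assumes st: "s \<in> S" "t \<in> S" and s0: "s0 \<in> S" "t0 \<in> S" "s0 \<noteq> t0"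
    and q: "q \<in> carrier G" and y: "y \<in> carrier G"
    and u: "conj G y s0 \<in> Wg {conj G q s, conj G q t}" and v: "conj G y t0 \<in> Wg {conj G q s, conj G q t}"
  shows "conj G q s \<in> Wg {conj G y s0, conj G y t0} \<and> conj G q t \<in> Wg {conj G y s0, conj G y t0}"
proof -
  define J where "J = {s, t}"
  have JS: "J \<subseteq> S" using st by (auto simp: J_def)
  have Jc: "J \<subseteq> carrier G" "\<forall>a\<in>J. a \<otimes> a = \<one>" using S_sub_invol JS by auto
  have sc: "s \<in> carrier G" "t \<in> carrier G" "s0 \<in> carrier G" "t0 \<in> carrier G"
    using st s0 S_carrier by auto
  have WJc: "Wg J \<subseteq> carrier G" using Wg_carrier Jc by blast
  have WJq: "Wg {conj G q s, conj G q t} = conj G q ` Wg J"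
    using Wg_conj[OF Jc(1) q] by (simp add: J_def)
  obtain h0 where h0: "h0 \<in> Wg J" "conj G y s0 = conj G q h0" using u WJq by auto
  obtain h1 where h1: "h1 \<in> Wg J" "conj G y t0 = conj G q h1" using v WJq by auto
  have hc: "h0 \<in> carrier G" "h1 \<in> carrier G" using h0 h1 WJc by auto
  define z0 where "z0 = inv y \<otimes> q"
  have z0c: "z0 \<in> carrier G" using y q by (simp add: z0_def)
  have bk: "x = conj G (inv y) (conj G y x)" if "x \<in> carrier G" for x
    using that y by (simp add: conj_mult[symmetric])
  have s0e: "s0 = conj G z0 h0"
  proof -
    have "s0 = conj G (inv y) (conj G y s0)" using bk sc by blast
    also have "\<dots> = conj G z0 h0" using h0(2) y q hc by (simp add: z0_def conj_mult)
    finally show ?thesis .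
  qed
  have t0e: "t0 = conj G z0 h1"
  proof -
    have "t0 = conj G (inv y) (conj G y t0)" using bk sc by blast
    also have "\<dots> = conj G z0 h1" using h1(2) y q hc by (simp add: z0_def conj_mult)
    finally show ?thesis .
  qed
  define Q where "Q n \<longleftrightarrow> (\<exists>g\<in>Wg J. len (z0 \<otimes> g) = n)" for n
  have "Q (len (z0 \<otimes> \<one>))" using Wg_one by (auto simp: Q_def)
  then have "Q (LEAST n. Q n)" by (rule LeastI)
  then obtain g where g: "g \<in> Wg J" "len (z0 \<otimes> g) = (LEAST n. Q n)" unfolding Q_def by blast
  have gc: "g \<in> carrier G" using g WJc by auto
  define z where "z = z0 \<otimes> g"
  have zc: "z \<in> carrier G" using z0c gc by (simp add: z_def)
  have zmin: "\<forall>g'\<in>Wg J. len z \<le> len (z \<otimes> g')"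
  proof
    fix g' assume g': "g' \<in> Wg J"
    then have "g \<otimes> g' \<in> Wg J" using g Wg_mult Jc by blast
    then have "Q (len (z0 \<otimes> (g \<otimes> g')))" by (auto simp: Q_def)
    then have "len z \<le> len (z0 \<otimes> (g \<otimes> g'))" using g(2) Least_le[of Q] by (simp add: z_def)
    then show "len z \<le> len (z \<otimes> g')" using z0c gc g' WJc by (auto simp: z_def m_assoc)
  qed
  define v0 v1 where "v0 = inv g \<otimes> h0 \<otimes> g" "v1 = inv g \<otimes> h1 \<otimes> g"
  have gi: "inv g \<in> Wg J" by (rule Wg_inv[OF Jc g(1)])
  have v0W: "v0 \<in> Wg J" "v1 \<in> Wg J"
    unfolding v0_v1_def by (rule Wg_mult[OF Jc(1) Wg_mult[OF Jc(1) gi]], fact, fact)+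
  have e0: "s0 \<otimes> z = z \<otimes> v0"
    using s0e z0c gc hc by (simp add: z_def v0_v1_def conj_def m_assoc)
  have e1: "t0 \<otimes> z = z \<otimes> v1"
    using t0e z0c gc hc by (simp add: z_def v0_v1_def conj_def m_assoc)
  have v0J: "v0 \<in> J" by (rule key12[OF JS zc zmin v0W(1) s0(1) e0])
  have v1J: "v1 \<in> J" by (rule key12[OF JS zc zmin v0W(2) s0(2) e1])
  have "v0 \<noteq> v1"
  proof
    assume "v0 = v1"
    then have "s0 \<otimes> z = t0 \<otimes> z" using e0 e1 by simp
    then show False using s0(3) sc zc by simp
  qed
  then have Jv: "J = {v0, v1}" using v0J v1J by (auto simp: J_def)
  have cv0: "conj G (q \<otimes> g) v0 = conj G y s0"
    using h0(2) q gc hc by (simp add: v0_v1_def conj_def m_assoc inv_mult_group)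
  have cv1: "conj G (q \<otimes> g) v1 = conj G y t0"
    using h1(2) q gc hc by (simp add: v0_v1_def conj_def m_assoc inv_mult_group)
  have qgc: "q \<otimes> g \<in> carrier G" using q gc by simp
  have img: "conj G (q \<otimes> g) ` Wg J = Wg {conj G y s0, conj G y t0}"
    using Wg_conj[OF Jc(1) qgc] Jv cv0 cv1 by simp
  have mem: "conj G q x \<in> Wg {conj G y s0, conj G y t0}" if "x \<in> J" for x
  proof -
    have xc: "x \<in> carrier G" using that Jc by auto
    have "conj G (inv g) x \<in> Wg J"
      using Wg_conj_mem[OF Jc(1,2)] Wg_inv[OF Jc(1,2) g(1)] Wg_incl[OF Jc(1) that] by blast
    moreover have "conj G q x = conj G (q \<otimes> g) (conj G (inv g) x)"
      using q gc xc by (simp add: conj_mult[symmetric] m_assoc)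
    ultimately show ?thesis using img by blast
  qed
  show ?thesis using mem by (auto simp: J_def)
qed

end

context coxsys begin

lemma conj_int_pow: assumes "c \<in> carrier G" "x \<in> carrier G" shows "conj G c (x [^] (k::int)) = (conj G c x) [^] k"
proof (cases k rule: int_cases2)
  case (nonneg n)
  then show ?thesis using assms by (simp add: int_pow_int conj_pow)
next
  case (nonpos n)
  then show ?thesis using assms by (simp add: int_pow_neg_int conj_pow conj_inv)
qed

lemma dihedral_int:
  assumes uv: "u \<in> carrier G" "v \<in> carrier G" "u \<otimes> u = \<one>" "v \<otimes> v = \<one>" and g: "g \<in> Wg {u, v}"
  shows "\<exists>k::int. g = (u \<otimes> v) [^] k \<or> g = (u \<otimes> v) [^] k \<otimes> u"
proof -
  define r where "r = u \<otimes> v"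
  have rc: "r \<in> carrier G" using uv by (simp add: r_def)
  have iu: "inv u = u" using uv by (simp add: inv_equality)
  have iv: "inv v = v" using uv by (simp add: inv_equality)
  have uuv: "u \<otimes> (u \<otimes> v) = v" using uv by (simp flip: m_assoc)
  have cr: "conj G u r = inv r"
  proof -
    have "conj G u r = u \<otimes> (u \<otimes> v) \<otimes> inv u" by (simp add: conj_def r_def)
    also have "\<dots> = v \<otimes> u" using uuv iu by simp
    also have "\<dots> = inv r" using uv iu iv by (simp add: r_def inv_mult_group)
    finally show ?thesis .
  qed
  define D where "D = {g. \<exists>k::int. g = r [^] k \<or> g = r [^] k \<otimes> u}"
  have ur: "u \<otimes> r [^] k = r [^] (-k) \<otimes> u" for k :: int
  proof -
    have "u \<otimes> r [^] k = conj G u (r [^] k) \<otimes> u"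
      using uv rc iu by (simp add: conj_def m_assoc)
    also have "conj G u (r [^] k) = r [^] (-k)"
      using uv rc cr by (simp add: conj_int_pow int_pow_inv int_pow_neg)
    finally show ?thesis .
  qed
  have Du: "u \<otimes> x \<in> D" if xD: "x \<in> D" for x
  proof -
    obtain k :: int where "x = r [^] k \<or> x = r [^] k \<otimes> u" using xD D_def by auto
    then show ?thesis
    proof
      assume "x = r [^] k" then show ?thesis using ur by (auto simp: D_def)
    next
      assume x: "x = r [^] k \<otimes> u"
      have "u \<otimes> x = (u \<otimes> r [^] k) \<otimes> u" using uv rc by (simp add: x m_assoc)
      also have "\<dots> = r [^] (-k) \<otimes> (u \<otimes> u)" using uv rc by (simp add: ur m_assoc)
      finally have "u \<otimes> x = r [^] (-k)" using uv rc by simp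
      then show ?thesis by (auto simp: D_def)
    qed
  qed
  have Dr: "r \<otimes> x \<in> D" if xD: "x \<in> D" for x
  proof -
    have rk: "r \<otimes> r [^] k = r [^] (1 + k)" for k :: int using rc by (simp add: int_pow_mult)
    obtain k :: int where "x = r [^] k \<or> x = r [^] k \<otimes> u" using xD D_def by auto
    then show ?thesis
    proof
      assume "x = r [^] k" then show ?thesis using rk by (auto simp: D_def)
    next
      assume x: "x = r [^] k \<otimes> u"
      have "r \<otimes> x = (r \<otimes> r [^] k) \<otimes> u" using uv rc by (simp add: x m_assoc)
      then have "r \<otimes> x = r [^] (1 + k) \<otimes> u" by (simp add: rk)
      then show ?thesis by (auto simp: D_def)
    qed
  qed
  have vur: "v = u \<otimes> r" using uuv by (simp add: r_def)
  obtain x where x: "x \<in> lists {u, v}" "g = wprod G x" using g by (auto simp: Wg_def)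
  have "x \<in> lists {u, v} \<Longrightarrow> wprod G x \<in> D" for x
  proof (induction x)
    case Nil then show ?case by (auto simp: D_def intro!: exI[of _ 0])
  next
    case (Cons a x)
    then have ax: "wprod G x \<in> D" "a = u \<or> a = v" by auto
    have "set x \<subseteq> carrier G" using Cons.prems uv by auto
    then have xc: "wprod G x \<in> carrier G" by simp
    show ?case
    proof (cases "a = u")
      case True then show ?thesis using Du ax by simp
    next
      case False
      then have "a = v" using ax by auto
      then have "wprod G (a # x) = u \<otimes> (r \<otimes> wprod G x)" using vur uv rc xc by (simp add: m_assoc)
      then show ?thesis using Du Dr ax by simp
    qed
  qed
  then have "wprod G x \<in> D" using x(1) .
  then show ?thesis using x by (simp add: D_def r_def)
qed

lemma int_pow_mod: assumes "x \<in> carrier G" "ord x > 0"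
  shows "x [^] (k::int) = x [^] (nat (k mod int (ord x)))" "nat (k mod int (ord x)) < ord x"
proof -
  have "int (ord x) dvd (k mod int (ord x) - k)"
    using mod_eq_dvd_iff[of "k mod int (ord x)" "int (ord x)" k] by simp
  then have "x [^] k = x [^] (k mod int (ord x))" using int_pow_eq assms(1) by blast
  also have "\<dots> = x [^] (nat (k mod int (ord x)))"
    using int_pow_int[of G x "nat (k mod int (ord x))"] assms by simp
  finally show "x [^] (k::int) = x [^] (nat (k mod int (ord x)))" .
  show "nat (k mod int (ord x)) < ord x" using assms by (simp add: nat_less_iff)
qed

lemma length_rho[simp]: "length (rho G u v) = ord (u \<otimes> v)" by (simp add: rho_def)
lemma rho_nth: "i < ord (u \<otimes> v) \<Longrightarrow> rho G u v ! i = (u \<otimes> v) [^] i \<otimes> u" by (simp add: rho_def)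

lemma dihedral_nat:
  assumes uv: "u \<in> carrier G" "v \<in> carrier G" "u \<otimes> u = \<one>" "v \<otimes> v = \<one>" and g: "g \<in> Wg {u, v}"
    and n: "ord (u \<otimes> v) > 0"
  shows "\<exists>k<ord (u \<otimes> v). g = (u \<otimes> v) [^] k \<or> g = (u \<otimes> v) [^] k \<otimes> u"
proof -
  obtain k :: int where k: "g = (u \<otimes> v) [^] k \<or> g = (u \<otimes> v) [^] k \<otimes> u" using dihedral_int[OF uv g] by blast
  have c: "u \<otimes> v \<in> carrier G" using uv by simp
  note m = int_pow_mod[OF c n, of k]
  show ?thesis
    by (rule exI[of _ "nat (k mod int (ord (u \<otimes> v)))"]) (use m k in auto)
qed

lemma par_pow: "x \<in> carrier G \<Longrightarrow> \<not> par x \<Longrightarrow> \<not> par (x [^] (k::nat))"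
  by (induction k) (auto simp: par_one par_mult)

lemma odd_in_rho:
  assumes uv: "u \<in> carrier G" "v \<in> carrier G" "u \<otimes> u = \<one>" "v \<otimes> v = \<one>" "par u" "par v"
    and g: "g \<in> Wg {u, v}" "par g" and n: "ord (u \<otimes> v) > 0"
  shows "g \<in> set (rho G u v)"
proof -
  obtain k where k: "k < ord (u \<otimes> v)" "g = (u \<otimes> v) [^] k \<or> g = (u \<otimes> v) [^] k \<otimes> u"
    using dihedral_nat[OF uv(1-4) g(1) n] by blast
  have "\<not> par (u \<otimes> v)" using uv by (simp add: par_mult)
  then have "\<not> par ((u \<otimes> v) [^] k)" using par_pow uv by simp
  then have "g = (u \<otimes> v) [^] k \<otimes> u" using k g by auto
  moreover have "rho G u v ! k \<in> set (rho G u v)" using k(1) by (intro nth_mem) simp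
  ultimately show ?thesis using k(1) rho_nth[of k u v] by simp
qed

lemma rho_in_Wg: assumes "u \<in> carrier G" "v \<in> carrier G" shows "set (rho G u v) \<subseteq> Wg {u, v}"
proof
  fix x assume "x \<in> set (rho G u v)"
  then obtain i :: nat where x: "x = (u \<otimes> v) [^] i \<otimes> u" by (auto simp: rho_def)
  have Ac: "{u, v} \<subseteq> carrier G" using assms by auto
  have uW: "u \<in> Wg {u,v}" "v \<in> Wg {u,v}" using Wg_incl[OF Ac] by auto
  have "u \<otimes> v \<in> Wg {u,v}" by (rule Wg_mult[OF Ac uW])
  then have "(u \<otimes> v) [^] i \<in> Wg {u,v}" by (rule Wg_pow[OF Ac])
  then show "x \<in> Wg {u, v}" unfolding x by (rule Wg_mult[OF Ac _ uW(1)])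
qed

lemma rho_par: assumes "u \<in> carrier G" "v \<in> carrier G" "par u" "par v" "x \<in> set (rho G u v)"
  shows "par x"
proof -
  obtain i :: nat where x: "x = (u \<otimes> v) [^] i \<otimes> u" using assms(5) by (auto simp: rho_def)
  have "\<not> par (u \<otimes> v)" using assms by (simp add: par_mult)
  then have "\<not> par ((u \<otimes> v) [^] i)" using par_pow assms by simp
  then show ?thesis using assms by (simp add: x par_mult)
qed

lemma ord_conj: "q \<in> carrier G \<Longrightarrow> x \<in> carrier G \<Longrightarrow> ord (conj G q x) = ord x"
proof -
  assume qx: "q \<in> carrier G" "x \<in> carrier G"
  have "conj G q x [^] n = \<one> \<longleftrightarrow> x [^] n = \<one>" for n :: nat
  proof -
    have "conj G q x [^] n = conj G q (x [^] n)" using qx by (simp add: conj_pow)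
    also have "\<dots> = \<one> \<longleftrightarrow> x [^] n = \<one>"
      using conj_inj[of q "x [^] n" \<one>] qx by auto
    finally show ?thesis .
  qed
  then have "\<forall>n. conj G q x [^] n = \<one> \<longleftrightarrow> ord x dvd n" using pow_eq_id qx by simp
  then show ?thesis using ord_unique[of "conj G q x" "ord x"] qx by simp
qed

lemma rho_conj: assumes "q \<in> carrier G" "s \<in> carrier G" "t \<in> carrier G"
  shows "map (conj G q) (rho G s t) = rho G (conj G q s) (conj G q t)"
proof -
  have e: "conj G q s \<otimes> conj G q t = conj G q (s \<otimes> t)" using assms by (simp add: conj_hom)
  have o: "ord (conj G q s \<otimes> conj G q t) = ord (s \<otimes> t)" using assms by (simp add: e ord_conj)
  show ?thesis
  proof (rule nth_equalityI)
    fix i assume "i < length (map (conj G q) (rho G s t))"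
    then have i: "i < ord (s \<otimes> t)" by simp
    have "conj G q ((s \<otimes> t) [^] i \<otimes> s) = (conj G q s \<otimes> conj G q t) [^] i \<otimes> conj G q s"
      using assms by (simp add: conj_hom conj_pow)
    then show "map (conj G q) (rho G s t) ! i = rho G (conj G q s) (conj G q t) ! i"
      using i o by (simp add: rho_nth)
  qed (simp add: o)
qed


lemma rev_rho: assumes uv: "u \<in> carrier G" "v \<in> carrier G" "u \<otimes> u = \<one>" "v \<otimes> v = \<one>"
  shows "rev (rho G u v) = rho G v u"
proof -
  define r where "r = u \<otimes> v"
  have rc: "r \<in> carrier G" using uv by (simp add: r_def)
  have iu: "inv u = u" using uv by (simp add: inv_equality)
  have iv: "inv v = v" using uv by (simp add: inv_equality)
  have vu: "v \<otimes> u = inv r" using uv iu iv by (simp add: r_def inv_mult_group)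
  have o: "ord (v \<otimes> u) = ord r" using vu rc by simp
  show ?thesis
  proof (rule nth_equalityI)
    show "length (rev (rho G u v)) = length (rho G v u)" using o by (simp add: r_def)
  next
    fix i assume "i < length (rev (rho G u v))"
    then have i: "i < ord r" by (simp add: r_def)
    have "rev (rho G u v) ! i = r [^] (ord r - Suc i) \<otimes> u"
      using i by (simp add: rev_nth rho_nth r_def)
    also have "r [^] (ord r - Suc i) = inv (r [^] Suc i)"
    proof -
      have "r [^] (ord r - Suc i) \<otimes> r [^] Suc i = r [^] (ord r - Suc i + Suc i)"
        by (rule nat_pow_mult[OF rc])
      also have "\<dots> = \<one>" using i rc by simp
      finally show ?thesis using rc by (simp add: inv_equality)
    qed
    also have "inv (r [^] Suc i) = (inv r) [^] i \<otimes> inv r"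
      by (metis nat_pow_inv[OF rc] nat_pow_Suc)
    also have "(inv r) [^] i \<otimes> inv r \<otimes> u = (inv r) [^] i \<otimes> v"
    proof -
      have "inv r \<otimes> u = v" using uv by (simp add: vu[symmetric] m_assoc)
      then show ?thesis using rc uv by (simp add: m_assoc)
    qed
    also have "\<dots> = rho G v u ! i" using i o vu by (simp add: rho_nth)
    finally show "rev (rho G u v) ! i = rho G v u ! i" .
  qed
qed

lemma rho_inj: assumes c: "u \<in> carrier G" "v \<in> carrier G" "x \<in> carrier G" "y \<in> carrier G"
  and e: "rho G u v = rho G x y" and l: "2 \<le> length (rho G u v)"
  shows "u = x \<and> v = y"
proof -
  have l2: "2 \<le> ord (u \<otimes> v)" "2 \<le> ord (x \<otimes> y)" using l e by (metis length_rho)+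
  have "rho G u v ! 0 = rho G x y ! 0" using e by simp
  then have ux: "u = x" using l2 c by (simp add: rho_nth)
  have "rho G u v ! 1 = rho G x y ! 1" using e by simp
  then have "u \<otimes> v \<otimes> u = u \<otimes> y \<otimes> u" using l2 c ux by (simp add: rho_nth)
  then have "v = y" using c by (simp add: m_assoc lcancel)
  then show ?thesis using ux by simp
qed

lemma subseq_distinct: "subseq xs ys \<Longrightarrow> distinct ys \<Longrightarrow> distinct xs"
  by (induction rule: list_emb.induct) (auto dest: list_emb_set)

lemma subseq_full: assumes "subseq b L" "distinct L" "set L \<subseteq> set b" shows "b = L"
proof -
  have "length L = card (set L)" using assms(2) by (simp add: distinct_card)
  also have "\<dots> \<le> card (set b)" using assms(3) by (simp add: card_mono)
  also have "\<dots> \<le> length b" by (rule card_length)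
  finally have "length L \<le> length b" .
  moreover have "length b \<le> length L" using assms(1) by (rule list_emb_length)
  ultimately have "length b = length L" by simp
  then show ?thesis using subseq_same_length[OF assms(1)] by simp
qed


lemma subseq_set: "subseq xs ys \<Longrightarrow> set xs \<subseteq> set ys"
  by (induction rule: list_emb.induct) auto

lemma conj_S: assumes "s \<in> S" "q \<in> carrier G"
  shows "conj G q s \<in> carrier G" "conj G q s \<otimes> conj G q s = \<one>" "par (conj G q s)"
proof -
  have sc: "s \<in> carrier G" using assms S_carrier by auto
  show "conj G q s \<in> carrier G" using sc assms by simp
  have "conj G q s \<otimes> conj G q s = conj G q (s \<otimes> s)" using sc assms by (simp add: conj_hom)
  then show "conj G q s \<otimes> conj G q s = \<one>" using S_invol assms sc by simp
  show "par (conj G q s)" using sc assms par_S[OF assms(1)] by (simp add: conj_def par_mult par_inv)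
qed

lemma core:
  assumes st: "s \<in> S" "t \<in> S" and q: "q \<in> carrier G"
    and X: "X = rho G (conj G q s) (conj G q t)" and n2: "2 \<le> length X"
    and L: "set L = set X" "distinct (U @ L @ V)"
    and N: "(u', v') \<in> frakN G S m"
    and sub: "subseq (rho G u' v') (U @ L @ V)"
  shows "(2 \<le> card (set (rho G u' v') \<inter> set X) \<longrightarrow> rho G u' v' = L) \<and>
         (card (set (rho G u' v') \<inter> set X) \<le> 1 \<longrightarrow> (\<forall>L'. set L' = set X \<longrightarrow> subseq (rho G u' v') (U @ L' @ V)))"
proof -
  obtain y s0 t0 where y: "y \<in> carrier G" "s0 \<in> S" "t0 \<in> S" "s0 \<noteq> t0"
    and uv: "u' = conj G y s0" "v' = conj G y t0"
    using N by (auto simp: frakN_def frakM_def)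
  define s' t' where "s' = conj G q s" "t' = conj G q t"
  note cs = conj_S[OF st(1) q] conj_S[OF st(2) q]
  note cu = conj_S[OF y(2) y(1)] conj_S[OF y(3) y(1)]
  have cs': "s' \<in> carrier G" "s' \<otimes> s' = \<one>" "par s'" "t' \<in> carrier G" "t' \<otimes> t' = \<one>" "par t'"
    using cs by (auto simp: s'_t'_def)
  have cu': "u' \<in> carrier G" "u' \<otimes> u' = \<one>" "par u'" "v' \<in> carrier G" "v' \<otimes> v' = \<one>" "par v'"
    using cu by (auto simp: uv)
  define R where "R = rho G u' v'"
  obtain \<alpha> \<beta>\<gamma> where a1: "R = \<alpha> @ \<beta>\<gamma>" "subseq \<alpha> U" "subseq \<beta>\<gamma> (L @ V)"
    using sub by (auto simp: R_def elim: subseq_appendE)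
  obtain \<beta> \<gamma> where a2: "\<beta>\<gamma> = \<beta> @ \<gamma>" "subseq \<beta> L" "subseq \<gamma> V"
    using a1(3) by (auto elim: subseq_appendE)
  have dR: "distinct R" unfolding R_def by (rule subseq_distinct[OF sub L(2)])
  have sets: "set \<alpha> \<subseteq> set U" "set \<beta> \<subseteq> set L" "set \<gamma> \<subseteq> set V"
    using a1 a2 subseq_set by auto
  have disj: "set U \<inter> set L = {}" "set V \<inter> set L = {}" using L(2) by auto
  have RX: "set R \<inter> set X = set \<beta>" using sets disj L(1) a1 a2 by auto
  have Rdec: "R = \<alpha> @ \<beta> @ \<gamma>" using a1 a2 by simp
  have db: "distinct \<beta>" using dR Rdec by simp
  show ?thesis
  proof (intro conjI impI allI)
    assume c: "card (set (rho G u' v') \<inter> set X) \<le> 1"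
    fix L' assume L': "set L' = set X"
    have "length \<beta> \<le> 1" using c RX db by (simp add: R_def distinct_card[symmetric])
    then have "subseq \<beta> L'"
    proof (cases \<beta>)
      case (Cons b bs)
      then have "bs = []" using \<open>length \<beta> \<le> 1\<close> by simp
      moreover have "b \<in> set L'" using Cons sets L L' by auto
      ultimately show ?thesis using Cons by (simp add: subseq_singleton_left)
    qed simp
    then show "subseq (rho G u' v') (U @ L' @ V)"
      using a1(2) a2(3) Rdec by (simp add: R_def list_emb_append_mono)
  next
    assume c: "2 \<le> card (set (rho G u' v') \<inter> set X)"
    have lb: "2 \<le> length \<beta>" using c RX card_length[of \<beta>] by (simp add: R_def)
    define i where "i = length \<alpha>"
    have iR: "Suc i < length R" using lb Rdec by (simp add: i_def)
    have ri: "R ! i \<in> set X" "R ! Suc i \<in> set X"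
    proof -
      obtain b0 b1 rest where bb: "\<beta> = b0 # b1 # rest" using lb by (cases \<beta>; cases "tl \<beta>") auto
      have "R ! i = \<beta> ! 0" "R ! Suc i = \<beta> ! 1" using Rdec bb by (simp_all add: i_def nth_append)
      moreover have "\<beta> ! 0 \<in> set \<beta>" "\<beta> ! 1 \<in> set \<beta>" using bb by auto
      ultimately show "R ! i \<in> set X" "R ! Suc i \<in> set X" using RX by auto
    qed
    define W1 where "W1 = Wg {s', t'}"
    have A1: "{s', t'} \<subseteq> carrier G" "\<forall>a\<in>{s', t'}. a \<otimes> a = \<one>" using cs' by auto
    have XW: "set X \<subseteq> W1" using rho_in_Wg cs' by (simp add: X W1_def s'_t'_def)
    define p where "p = u' \<otimes> v'"
    have pc: "p \<in> carrier G" using cu' by (simp add: p_def)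
    have ordp: "Suc i < ord p" using iR by (simp add: R_def p_def)
    have Ri: "R ! i = p [^] i \<otimes> u'" "R ! Suc i = p [^] Suc i \<otimes> u'"
      using ordp by (simp_all add: R_def p_def rho_nth)
    have RiW: "R ! i \<in> W1" "R ! Suc i \<in> W1" using ri XW by auto
    have "R ! Suc i = (p \<otimes> p [^] i) \<otimes> u'" by (simp only: Ri(2) nat_pow_Suc2[OF pc])
    also have "\<dots> = p \<otimes> R ! i" using Ri(1) pc cu' by (simp add: m_assoc)
    finally have "R ! Suc i = p \<otimes> R ! i" .
    then have "p = R ! Suc i \<otimes> inv (R ! i)"
      using pc cu' Ri by (simp add: m_assoc)
    then have pW: "p \<in> W1" using RiW Wg_mult[OF A1(1)] Wg_inv[OF A1] by (simp add: W1_def)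
    have "u' = inv (p [^] i) \<otimes> R ! i" using Ri pc cu' by (simp add: m_assoc)
    then have uW: "u' \<in> W1" using RiW pW Wg_mult[OF A1(1)] Wg_inv[OF A1] Wg_pow[OF A1(1)]
      by (simp add: W1_def)
    have "v' = inv u' \<otimes> p" using cu' by (simp add: p_def)
    then have vW: "v' \<in> W1" using uW pW Wg_mult[OF A1(1)] Wg_inv[OF A1] by (simp add: W1_def)
    have cr: "s' \<in> Wg {u', v'} \<and> t' \<in> Wg {u', v'}"
      using crux[OF st y(2,3,4) q y(1)] uW vW by (simp add: W1_def s'_t'_def uv)
    have A2: "{u', v'} \<subseteq> carrier G" using cu' by auto
    have W12: "W1 \<subseteq> Wg {u', v'}" unfolding W1_def using cr Wg_sub[OF A2] by auto
    have W21: "Wg {u', v'} \<subseteq> W1" unfolding W1_def using uW vW Wg_sub[of "{s', t'}"] A1 by (auto simp: W1_def)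
    have ordp0: "0 < ord (u' \<otimes> v')" using ordp by (simp add: p_def)
    have ordX: "0 < ord (s' \<otimes> t')" using n2 by (simp add: X s'_t'_def)
    have XR: "set X \<subseteq> set R"
    proof
      fix x assume x: "x \<in> set X"
      have "x \<in> Wg {u', v'}" using x XW W12 by auto
      moreover have "par x" using rho_par[of s' t' x] cs' x by (simp add: X s'_t'_def)
      ultimately show "x \<in> set R" using odd_in_rho[of u' v' x] cu' ordp0 by (simp add: R_def)
    qed
    have RXs: "set R \<subseteq> set X"
    proof
      fix x assume x: "x \<in> set R"
      have "x \<in> W1" using x rho_in_Wg[of u' v'] cu' W21 by (auto simp: R_def)
      moreover have "par x" using rho_par[of u' v' x] cu' x by (simp add: R_def)
      ultimately show "x \<in> set X" using odd_in_rho[of s' t' x] cs' ordX by (simp add: X W1_def s'_t'_def)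
    qed
    have "\<alpha> = []"
    proof -
      have "set \<alpha> \<subseteq> set L" using RXs L(1) Rdec by auto
      then have "set \<alpha> \<subseteq> set U \<inter> set L" using sets(1) by auto
      then show ?thesis using disj(1) by simp
    qed
    moreover have "\<gamma> = []"
    proof -
      have "set \<gamma> \<subseteq> set L" using RXs L(1) Rdec by auto
      then have "set \<gamma> \<subseteq> set V \<inter> set L" using sets(3) by auto
      then show ?thesis using disj(2) by simp
    qed
    ultimately have "R = \<beta>" using Rdec by simp
    moreover have "\<beta> = L"
      by (rule subseq_full[OF a2(2)]) (use L XR \<open>R = \<beta>\<close> in auto)
    ultimately show "rho G u' v' = L" by (simp add: R_def)
  qed
qed

end

lemma len_le1_rev: "length xs \<le> 1 \<Longrightarrow> rev xs = xs"
  by (cases xs) auto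

theorem theorem4p2:
  fixes G :: "('g, 'b) monoid_scheme" and S :: "'g set" and m :: "'g \<Rightarrow> 'g \<Rightarrow> enat"
    and w q s t s' t' :: 'g and a b :: "'g list"
  assumes cox: "coxeter_system G S m"
    and w: "w \<in> carrier G"
    and st: "(s, t) \<in> frakM S m"
    and ra: "reduced_expr G S a w"
    and rb: "reduced_expr G S b w"
    and bm: "braid_move m s t a b"
    and q: "q \<in> carrier G"
    and repl: "\<exists>u v. invs G a = u @ map (conj G q) (rho G s t) @ v \<and>
                     invs G b = u @ rev (map (conj G q) (rho G s t)) @ v"
    and s': "s' = conj G q s"
    and t': "t' = conj G q t"
  shows "Has G S m b =
    (\<lambda>p. Has G S m a p - (if p = (s', t') then 1 else 0) + (if p = (t', s') then 1 else 0))"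
proof -
  have grp: "group G" using cox by (simp add: coxeter_system_def)
  interpret coxsys G S m using grp cox by (simp add: coxsys_def coxsys_axioms_def)
  have sS: "s \<in> S" "t \<in> S" "s \<noteq> t" "m s t \<noteq> \<infinity>" using st by (auto simp: frakM_def)
  have msym: "m t s = m s t" and mge: "2 \<le> m s t" using cox sS by (auto simp: coxeter_system_def)
  have sc: "s \<in> carrier G" "t \<in> carrier G" using sS S_carrier by auto
  define X where "X = map (conj G q) (rho G s t)"
  have XX: "X = rho G s' t'" using rho_conj[OF q sc] by (simp add: X_def s' t')
  obtain U V where UV: "invs G a = U @ X @ V" "invs G b = U @ rev X @ V" using repl by (auto simp: X_def)
  have ra': "a \<in> lists S" "wprod G a = w" "length a = len w" using ra by (auto simp: reduced_iff)
  have rb': "b \<in> lists S" "wprod G b = w" "length b = len w" using rb by (auto simp: reduced_iff)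
  have da: "distinct (invs G a)" using reduced_distinct ra' by simp
  have db: "distinct (invs G b)" using reduced_distinct rb' by simp
  have ab: "a \<noteq> b"
  proof -
    obtain u v k where k: "m s t = enat k" "a = u @ alt s t k @ v" "b = u @ alt t s k @ v"
      using bm by (auto simp: braid_move_def)
    have "2 \<le> k" using mge k(1) by (simp add: enat_numeral[symmetric] del: enat_numeral)
    then have "a ! length u = s" "b ! length u = t" using k by (simp_all add: nth_append)
    then show ?thesis using sS(3) by auto
  qed
  have Xrev: "X \<noteq> rev X"
  proof
    assume "X = rev X"
    then have "invs G a = invs G b" using UV by simp
    then have "a = b" using invs_inj ra'(1) rb'(1) lists_S_carrier by blast
    then show False using ab by simp
  qed
  have n2: "2 \<le> length X"
  proof (rule ccontr)
    assume "\<not> 2 \<le> length X"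
    then have "rev X = X" using len_le1_rev[of X] by simp
    then show False using Xrev by simp
  qed
  have dA: "distinct (U @ X @ V)" using da UV by simp
  have dB: "distinct (U @ rev X @ V)" using db UV by simp
  have dX: "distinct X" using dA by simp
  note cs = conj_S[OF sS(1) q] conj_S[OF sS(2) q]
  have cs': "s' \<in> carrier G" "s' \<otimes>\<^bsub>G\<^esub> s' = \<one>\<^bsub>G\<^esub>" "t' \<in> carrier G" "t' \<otimes>\<^bsub>G\<^esub> t' = \<one>\<^bsub>G\<^esub>"
    using cs by (auto simp: s' t')
  have revX: "rev X = rho G t' s'" using rev_rho[OF cs'(1,3,2,4)] XX by simp
  have stn: "s' \<noteq> t'" using conj_inj[OF q sc] sS(3) by (auto simp: s' t')
  have ts: "(t, s) \<in> frakM S m" using sS msym by (auto simp: frakM_def)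
  have Nst: "(s', t') \<in> frakN G S m" "(t', s') \<in> frakN G S m"
    unfolding frakN_def s' t' using q st ts by blast+
  have Ncar: "u' \<in> carrier G \<and> v' \<in> carrier G" if "(u', v') \<in> frakN G S m" for u' v'
    using that conj_S by (auto simp: frakN_def frakM_def)
  have XX': "X = rho G (conj G q s) (conj G q t)" using XX by (simp add: s' t')
  note coreA = core[OF sS(1,2) q XX' n2 HOL.refl dA]
  have setrev: "set (rev X) = set X" by simp
  note coreB = core[OF sS(1,2) q XX' n2 setrev dB]
  have fa1: "(u', v') = (s', t')" if N: "(u', v') \<in> frakN G S m" and A: "subseq (rho G u' v') (invs G a)"
     and c: "2 \<le> card (set (rho G u' v') \<inter> set X)" for u' v'
  proof -
    have sub': "subseq (rho G u' v') (U @ X @ V)" using A UV(1) by simp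
    have e: "rho G u' v' = X" using conjunct1[OF coreA[OF N sub']] c by blast
    have l: "2 \<le> length (rho G u' v')" using e n2 by simp
    have "u' = s' \<and> v' = t'" by (rule rho_inj[OF conjunct1[OF Ncar[OF N]] conjunct2[OF Ncar[OF N]] cs'(1) cs'(3)])
      (use e XX l in simp_all)
    then show ?thesis by simp
  qed
  have fb1: "(u', v') = (t', s')" if N: "(u', v') \<in> frakN G S m" and B: "subseq (rho G u' v') (invs G b)"
     and c: "2 \<le> card (set (rho G u' v') \<inter> set X)" for u' v'
  proof -
    have sub': "subseq (rho G u' v') (U @ rev X @ V)" using B UV(2) by simp
    have e: "rho G u' v' = rev X" using conjunct1[OF coreB[OF N sub']] c by blast
    have l: "2 \<le> length (rho G u' v')" using e n2 by simp
    have "u' = t' \<and> v' = s'" by (rule rho_inj[OF conjunct1[OF Ncar[OF N]] conjunct2[OF Ncar[OF N]] cs'(3) cs'(1)])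
      (use e revX l in simp_all)
    then show ?thesis by simp
  qed
  have fa2: "subseq (rho G u' v') (invs G b)" if N: "(u', v') \<in> frakN G S m" and A: "subseq (rho G u' v') (invs G a)"
     and c: "card (set (rho G u' v') \<inter> set X) \<le> 1" for u' v'
  proof -
    have sub': "subseq (rho G u' v') (U @ X @ V)" using A UV(1) by simp
    have "subseq (rho G u' v') (U @ rev X @ V)" using conjunct2[OF coreA[OF N sub']] c setrev by blast
    then show ?thesis using UV(2) by simp
  qed
  have fb2: "subseq (rho G u' v') (invs G a)" if N: "(u', v') \<in> frakN G S m" and B: "subseq (rho G u' v') (invs G b)"
     and c: "card (set (rho G u' v') \<inter> set X) \<le> 1" for u' v'
  proof -
    have sub': "subseq (rho G u' v') (U @ rev X @ V)" using B UV(2) by simp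
    have "subseq (rho G u' v') (U @ X @ V)" using conjunct2[OF coreB[OF N sub']] c by blast
    then show ?thesis using UV(1) by simp
  qed
  have cX: "card (set X) = length X" using dX by (simp add: distinct_card)
  show ?thesis
  proof (rule ext)
    fix p :: "'g \<times> 'g"
    obtain u' v' where p: "p = (u', v')" by (cases p)
    show "Has G S m b p = Has G S m a p - (if p = (s', t') then 1 else 0) + (if p = (t', s') then 1 else 0)"
    proof (cases "p \<in> frakN G S m")
      case False
      then have "p \<noteq> (s', t')" "p \<noteq> (t', s')" using Nst by auto
      moreover have "Has G S m b p = 0" "Has G S m a p = 0" using False by (simp_all add: Has_def p)
      ultimately show ?thesis by simp
    next
      case True
      then have N: "(u', v') \<in> frakN G S m" using p by simp
      have Ha: "Has G S m a p = (if subseq (rho G u' v') (invs G a) then 1 else 0)"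
        using N by (simp add: Has_def has_def p)
      have Hb: "Has G S m b p = (if subseq (rho G u' v') (invs G b) then 1 else 0)"
        using N by (simp add: Has_def has_def p)
      have ne: "(s', t') \<noteq> (t', s')" using stn by simp
      show ?thesis
      proof (cases "p = (s', t')")
        case T1: True
        then have uv: "u' = s'" "v' = t'" using p by simp_all
        then have e: "rho G u' v' = X" using XX by simp
        have cc: "2 \<le> card (set (rho G u' v') \<inter> set X)" using e cX n2 by simp
        have sa: "subseq (rho G u' v') (invs G a)" unfolding e UV(1) by (intro subseq_drop_many prefix_imp_subseq) simp
        have nb: "\<not> subseq (rho G u' v') (invs G b)"
        proof
          assume "subseq (rho G u' v') (invs G b)"
          then have "(u', v') = (t', s')" by (rule fb1[OF N _ cc])
          then show False using uv ne by blast
        qed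
        have "p \<noteq> (t', s')" using T1 ne by simp
        then show ?thesis using T1 Ha Hb sa nb by simp
      next
        case F1: False
        show ?thesis
        proof (cases "p = (t', s')")
          case T2: True
          then have uv: "u' = t'" "v' = s'" using p by simp_all
          then have e: "rho G u' v' = rev X" using revX by simp
          have cc: "2 \<le> card (set (rho G u' v') \<inter> set X)" using e cX n2 by simp
          have sb: "subseq (rho G u' v') (invs G b)" unfolding e UV(2) by (intro subseq_drop_many prefix_imp_subseq) simp
          have na: "\<not> subseq (rho G u' v') (invs G a)"
          proof
            assume "subseq (rho G u' v') (invs G a)"
            then have "(u', v') = (s', t')" by (rule fa1[OF N _ cc])
            then show False using uv ne by blast
          qed
          show ?thesis using T2 F1 Ha Hb sb na by simp
        next
          case F2: False
          have F1': "(u', v') \<noteq> (s', t')" and F2': "(u', v') \<noteq> (t', s')" using F1 F2 p by simp_all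
          have "subseq (rho G u' v') (invs G a) \<longleftrightarrow> subseq (rho G u' v') (invs G b)"
          proof
            assume A: "subseq (rho G u' v') (invs G a)"
            show "subseq (rho G u' v') (invs G b)"
            proof (cases "2 \<le> card (set (rho G u' v') \<inter> set X)")
              case True then show ?thesis using fa1[OF N A] F1' by blast
            next
              case False then show ?thesis using fa2[OF N A] by simp
            qed
          next
            assume B: "subseq (rho G u' v') (invs G b)"
            show "subseq (rho G u' v') (invs G a)"
            proof (cases "2 \<le> card (set (rho G u' v') \<inter> set X)")
              case True then show ?thesis using fb1[OF N B] F2' by blast
            next
              case False then show ?thesis using fb2[OF N B] by simp
            qed
          qed
          then show ?thesis using F1 F2 Ha Hb by simp
        qed
      qed
    qed
  qed
qed

end
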